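(* Let $m\ge1$ and let $\Sigma$ be an alphabet with $|\Sigma|=m$. If $m\le 2$, then for every antimorphic involution $\theta$ on $\Sigma^*$ there is no infinite word over $\Sigma$ that is pseudo-cube-free with respect to $\theta$. If $m\ge 3$, then for every antimorphic involution $\theta$ on $\Sigma^*$ there exists an infinite word over $\Sigma$ that is pseudo-cube-free with respect to $\theta$.
   Context: A function $\theta:\Sigma^*\to\Sigma^*$ is an antimorphic involution if $\theta(uv)=\theta(v)\theta(u)$ and $\theta(\theta(w))=w$ for all words $u,v,w$. For an integer $k\ge 2$, a nonempty word $w$ is a pseudo $k$th power with respect to $\theta$ if $w=u_1u_2\cdots u_k$ where for all $1\le i,j\le k$, either $u_i=u_j$ or $u_i=\theta(u_j)$. A pseudo cube is a pseudo $3$rd power. A (finite or infinite) word is pseudo-cube-free with respect to $\theta$ if none of its factors (contiguous subwords) is a pseudo cube with respect to $\theta$. *)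

theory Defs
  imports Main
begin

text \<open>Words over an alphabet S are lists in lists S; infinite words are
functions nat => 'a with range in S.\<close>

definition antimorphic_involution :: "'a set \<Rightarrow> ('a list \<Rightarrow> 'a list) \<Rightarrow> bool" where
  "antimorphic_involution S \<theta> \<longleftrightarrow>
     (\<forall>w\<in>lists S. \<theta> w \<in> lists S) \<and>
     (\<forall>u\<in>lists S. \<forall>v\<in>lists S. \<theta> (u @ v) = \<theta> v @ \<theta> u) \<and>
     (\<forall>w\<in>lists S. \<theta> (\<theta> w) = w)"

definition pseudo_power :: "('a list \<Rightarrow> 'a list) \<Rightarrow> nat \<Rightarrow> 'a list \<Rightarrow> bool" where
  "pseudo_power \<theta> k w \<longleftrightarrow> w \<noteq> [] \<and>
     (\<exists>us. length us = k \<and> w = concat us \<and>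
        (\<forall>i<k. \<forall>j<k. us ! i = us ! j \<or> us ! i = \<theta> (us ! j)))"

abbreviation pseudo_cube :: "('a list \<Rightarrow> 'a list) \<Rightarrow> 'a list \<Rightarrow> bool" where
  "pseudo_cube \<theta> w \<equiv> pseudo_power \<theta> 3 w"

definition inf_factor :: "(nat \<Rightarrow> 'a) \<Rightarrow> 'a list \<Rightarrow> bool" where
  "inf_factor x u \<longleftrightarrow> (\<exists>i n. u = map x [i..<i+n])"

definition pseudo_cube_free_inf :: "('a list \<Rightarrow> 'a list) \<Rightarrow> (nat \<Rightarrow> 'a) \<Rightarrow> bool" where
  "pseudo_cube_free_inf \<theta> x \<longleftrightarrow> (\<forall>u. inf_factor x u \<longrightarrow> \<not> pseudo_cube \<theta> u)"

end

theory Submission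
  imports Defs
begin

section \<open>Basic facts about antimorphic involutions\<close>

definition pith :: "('a list \<Rightarrow> 'a list) \<Rightarrow> 'a \<Rightarrow> 'a" where
  "pith th y = hd (th [y])"

lemma ai_props:
  assumes "antimorphic_involution S th"
  shows "\<And>w. w \<in> lists S \<Longrightarrow> th w \<in> lists S"
    and "\<And>u v. u \<in> lists S \<Longrightarrow> v \<in> lists S \<Longrightarrow> th (u @ v) = th v @ th u"
    and "\<And>w. w \<in> lists S \<Longrightarrow> th (th w) = w"
  using assms unfolding antimorphic_involution_def by auto

lemma th_nil:
  assumes "antimorphic_involution S th"
  shows "th [] = []"
proof -
  have "th ([] @ []) = th [] @ th []" by (rule ai_props(2)[OF assms]) simp_all
  then have "length (th []) = length (th []) + length (th [])" by (metis append.left_neutral length_append)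
  then show ?thesis by simp
qed

lemma th_single_ne:
  assumes "antimorphic_involution S th" "s \<in> S"
  shows "th [s] \<noteq> []"
proof
  assume "th [s] = []"
  then have "th (th [s]) = []" using th_nil[OF assms(1)] by simp
  moreover have "th (th [s]) = [s]" using ai_props(3)[OF assms(1)] assms(2) by simp
  ultimately show False by simp
qed

lemma th_single:
  assumes "antimorphic_involution S th" "y \<in> S"
  shows "th [y] = [pith th y] \<and> pith th y \<in> S"
proof -
  define L where "L = th [y]"
  have LS: "L \<in> lists S" using ai_props(1)[OF assms(1)] assms(2) L_def by simp
  have thL: "th L = [y]" using ai_props(3)[OF assms(1)] assms(2) L_def by simp
  have "\<exists>z. L = [z]"
  proof (cases L)
    case Nil
    then show ?thesis using thL th_nil[OF assms(1)] by simp
  next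
    case (Cons z r)
    show ?thesis
    proof (cases r)
      case Nil
      then show ?thesis using Cons by simp
    next
      case (Cons z' r')
      have zS: "z \<in> S" "z' \<in> S" "r' \<in> lists S" using LS \<open>L = z # r\<close> Cons by auto
      have "th L = th ([z] @ ([z'] @ r'))" using \<open>L = z # r\<close> Cons by simp
      also have "\<dots> = th ([z'] @ r') @ th [z]"
        using ai_props(2)[OF assms(1), of "[z]" "[z'] @ r'"] zS by simp
      also have "\<dots> = (th r' @ th [z']) @ th [z]"
        using ai_props(2)[OF assms(1), of "[z']" "r'"] zS by simp
      moreover have "length (th [z]) \<ge> 1" "length (th [z']) \<ge> 1"
        using th_single_ne[OF assms(1) zS(1)] th_single_ne[OF assms(1) zS(2)]
        by (simp_all add: Suc_leI)
      ultimately have "length (th L) \<ge> 2" by simp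
      then show ?thesis using thL by simp
    qed
  qed
  then obtain z where "L = [z]" by blast
  then show ?thesis using LS L_def unfolding pith_def by simp
qed

lemma th_word:
  assumes "antimorphic_involution S th" "w \<in> lists S"
  shows "th w = rev (map (pith th) w)"
  using assms(2)
proof (induction w rule: lists.induct)
  case Nil
  then show ?case using th_nil[OF assms(1)] by simp
next
  case (Cons y w)
  have yw: "[y] \<in> lists S" "w \<in> lists S" using Cons by auto
  have "th (y # w) = th ([y] @ w)" by simp
  also have "\<dots> = th w @ th [y]" using ai_props(2)[OF assms(1) yw] .
  finally show ?case using Cons th_single[OF assms(1)] by simp
qed

lemma pi_inv:
  assumes "antimorphic_involution S th" "y \<in> S"
  shows "pith th (pith th y) = y"
proof -
  have "th (th [y]) = [y]" using ai_props(3)[OF assms(1)] assms(2) by simp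
  then show ?thesis using th_single[OF assms(1) assms(2)]
      th_single[OF assms(1), of "pith th y"] by simp
qed

lemma junction:
  assumes "antimorphic_involution S th" "X \<in> lists S" "X \<noteq> []"
  shows "X @ th X = butlast X @ [last X, pith th (last X)] @ rev (map (pith th) (butlast X))"
proof -
  have e: "X = butlast X @ [last X]" using assms(3) by simp
  have "th X = rev (map (pith th) X)" using th_word[OF assms(1,2)] .
  also have "\<dots> = pith th (last X) # rev (map (pith th) (butlast X))"
    by (subst e) simp
  finally show ?thesis by (subst (1) e) simp
qed

lemma pc_struct:
  assumes "antimorphic_involution S th" "u \<in> lists S" "pseudo_cube th u"
  shows "(\<exists>X. X \<noteq> [] \<and> u = X @ X @ X) \<or> (\<exists>p s y. u = p @ [y, pith th y] @ s)"
proof -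
  obtain us where us: "length us = 3" "u = concat us"
    "\<forall>i<3. \<forall>j<3. us ! i = us ! j \<or> us ! i = th (us ! j)" and une: "u \<noteq> []"
    using assms(3) unfolding pseudo_power_def by blast
  have "\<exists>X Y Z. us = [X, Y, Z]"
    using us(1) by (auto simp: numeral_3_eq_3 length_Suc_conv)
  then obtain X Y Z where xyz: "us = [X, Y, Z]" by blast
  have u: "u = X @ Y @ Z" using us(2) xyz by simp
  have Y: "Y = X \<or> Y = th X" using us(3)[rule_format, of 1 0] xyz by simp
  have Z: "Z = X \<or> Z = th X" using us(3)[rule_format, of 2 0] xyz by simp
  have XS: "X \<in> lists S" using assms(2) u by simp
  have Xne: "X \<noteq> []"
  proof
    assume "X = []"
    then have "th X = []" using th_nil[OF assms(1)] by simp
    then show False using une u Y Z \<open>X = []\<close> by auto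
  qed
  show ?thesis
  proof (cases "Y = X \<and> Z = X")
    case True
    then show ?thesis using u Xne by blast
  next
    case False
    show ?thesis
    proof (cases "Y = X")
      case True
      then have "Z = th X" using False Z by blast
      then have "u = (X @ butlast X) @ [last X, pith th (last X)] @ rev (map (pith th) (butlast X))"
        using junction[OF assms(1) XS Xne] u True by simp
      then show ?thesis by blast
    next
      case f: False
      then have "Y = th X" using Y by blast
      then have "u = butlast X @ [last X, pith th (last X)] @ (rev (map (pith th) (butlast X)) @ Z)"
        using junction[OF assms(1) XS Xne] u by simp
      then show ?thesis by blast
    qed
  qed
qed

section \<open>Thue--Morse is cube-free\<close>

function tm :: "nat \<Rightarrow> bool" where
  "tm n = (if n = 0 then False else if even n then tm (n div 2) else \<not> tm (n div 2))"
  by auto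
termination by (relation "measure id") auto

declare tm.simps[simp del]

lemma tm_even: "tm (2 * n) = tm n"
  by (subst tm.simps) (cases n, simp_all add: tm.simps[of 0])

lemma tm_odd: "tm (2 * n + 1) = (\<not> tm n)"
  by (subst tm.simps) simp

lemma tm_even': "even j \<Longrightarrow> tm j = tm (j div 2)"
  by (metis dvd_mult_div_cancel tm_even)

lemma tm_odd': "odd j \<Longrightarrow> tm j = (\<not> tm (j div 2))"
  by (metis odd_two_times_div_two_succ tm_odd)

lemma tm_alt: "even j \<Longrightarrow> tm j \<noteq> tm (j + 1)"
  by (metis even_two_times_div_two tm_even tm_odd)

lemma tm_cf: "0 < p \<Longrightarrow> \<not> (\<forall>k<2*p. tm (i + k) = tm (i + k + p))"
proof (induction p arbitrary: i rule: less_induct)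
  case (less p)
  show ?case
  proof
    assume H: "\<forall>k<2*p. tm (i + k) = tm (i + k + p)"
    show False
    proof (cases "even p")
      case True
      then obtain q where q: "p = 2 * q" by blast
      have q0: "0 < q" "q < p" using less.prems q by auto
      show False
      proof (cases "even i")
        case True
        then obtain i' where i': "i = 2 * i'" by blast
        have "\<forall>k<2*q. tm (i' + k) = tm (i' + k + q)"
        proof (intro allI impI)
          fix k assume "k < 2 * q"
          then have "2*k < 2*p" using q by simp
          then have "tm (i + 2*k) = tm (i + 2*k + p)" using H by blast
          then show "tm (i' + k) = tm (i' + k + q)"
            using tm_even[of "i' + k"] tm_even[of "i' + k + q"] i' q
            by (simp add: algebra_simps)
        qed
        then show False using less.IH[OF q0(2) q0(1)] by blast
      next
        case False
        then obtain i' where i': "i = 2 * i' + 1" by (metis oddE)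
        have "\<forall>k<2*q. tm (i' + k) = tm (i' + k + q)"
        proof (intro allI impI)
          fix k assume "k < 2 * q"
          then have "2*k < 2*p" using q by simp
          then have "tm (i + 2*k) = tm (i + 2*k + p)" using H by blast
          then show "tm (i' + k) = tm (i' + k + q)"
            using tm_odd[of "i' + k"] tm_odd[of "i' + k + q"] i' q
            by (simp add: algebra_simps)
        qed
        then show False using less.IH[OF q0(2) q0(1)] by blast
      qed
    next
      case False
      have alt: "tm j \<noteq> tm (j + 1)" if "i \<le> j" "j + 1 < i + 3 * p" for j
      proof (cases "even j")
        case True
        then show ?thesis by (rule tm_alt)
      next
        case oj: False
        show ?thesis
        proof (cases "j + 1 < i + 2 * p")
          case True
          have a: "tm j = tm (j + p)" using H[rule_format, of "j - i"] True that by simp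
          have b: "tm (j + 1) = tm (j + 1 + p)" using H[rule_format, of "j + 1 - i"] True that by simp
          have "even (j + p)" using oj False by simp
          then show ?thesis using tm_alt[of "j + p"] a b by simp
        next
          case nt: False
          have ge: "i + p \<le> j" using nt less.prems by simp
          have a: "tm (j - p) = tm j" using H[rule_format, of "j - p - i"] ge that by simp
          have b: "tm (j - p + 1) = tm (j + 1)" using H[rule_format, of "j - p + 1 - i"] ge that
            by (simp add: Suc_diff_le)
          have "even (j - p)" using oj False ge by simp
          then show ?thesis using tm_alt[of "j - p"] a b by simp
        qed
      qed
      have par: "d < 3 * p \<Longrightarrow> tm (i + d) = (if even d then tm i else \<not> tm i)" for d
      proof (induction d)
        case 0
        then show ?case by simp
      next
        case (Suc d)
        then have "tm (i + d) \<noteq> tm (i + d + 1)" using alt[of "i + d"] by simp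
        then show ?case using Suc by auto
      qed
      have "tm (i + p) = (\<not> tm i)" using par[of p] False less.prems by simp
      moreover have "tm i = tm (i + p)" using H[rule_format, of 0] less.prems by simp
      ultimately show False by simp
    qed
  qed
qed

section \<open>The ternary word\<close>

definition xw :: "'a \<Rightarrow> 'a \<Rightarrow> 'a \<Rightarrow> nat \<Rightarrow> 'a" where
  "xw a b c n = (if even n then c else if tm (n div 2) then a else b)"

lemma xw_cf:
  assumes "a \<noteq> b" "a \<noteq> c" "b \<noteq> c" "0 < p"
  shows "\<not> (\<forall>k<2*p. xw a b c (i + k) = xw a b c (i + k + p))"
proof
  assume H: "\<forall>k<2*p. xw a b c (i + k) = xw a b c (i + k + p)"
  show False
  proof (cases "even p")
    case False
    have "xw a b c i = xw a b c (i + p)" using H[rule_format, of 0] assms(4) by simp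
    then show False using False assms unfolding xw_def by (auto split: if_splits)
  next
    case True
    then obtain q where q: "p = 2 * q" by blast
    have "\<forall>k<2*q. tm (i div 2 + k) = tm (i div 2 + k + q)"
    proof (intro allI impI)
      fix k assume k: "k < 2 * q"
      define j where "j = 2 * (i div 2 + k) + 1"
      have j1: "i \<le> j" "j - i < 2 * p" using k q unfolding j_def by auto
      have "xw a b c j = xw a b c (j + p)" using H[rule_format, of "j - i"] j1 by simp
      moreover have "j div 2 = i div 2 + k" "(j + p) div 2 = i div 2 + k + q" "odd j" "odd (j + p)"
        unfolding j_def using q by auto
      ultimately show "tm (i div 2 + k) = tm (i div 2 + k + q)"
        using assms unfolding xw_def by (auto split: if_splits)
    qed
    then show False using tm_cf[of q "i div 2"] q assms(4) by simp
  qed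
qed

lemma factor_nth:
  assumes "map x [i..<i+n] = u" "k < length u"
  shows "u ! k = x (i + k)"
  using assms by auto

lemma ternary_free:
  assumes ai: "antimorphic_involution S th"
    and S: "a \<in> S" "b \<in> S" "c \<in> S" and d: "a \<noteq> b" "a \<noteq> c" "b \<noteq> c"
    and pc: "pith th c \<noteq> a" "pith th c \<noteq> b"
  shows "range (xw a b c) \<subseteq> S \<and> pseudo_cube_free_inf th (xw a b c)"
proof
  show rg: "range (xw a b c) \<subseteq> S" using S unfolding xw_def by auto
  have pa: "pith th a \<noteq> c" using pi_inv[OF ai S(1)] pc(1) by metis
  have pb: "pith th b \<noteq> c" using pi_inv[OF ai S(2)] pc(2) by metis
  have nobad: "xw a b c (Suc j) \<noteq> pith th (xw a b c j)" for j
  proof (cases "even j")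
    case True
    then have "xw a b c j = c" "xw a b c (Suc j) \<in> {a, b}" unfolding xw_def by auto
    then show ?thesis using pc by auto
  next
    case False
    then have "xw a b c (Suc j) = c" "xw a b c j \<in> {a, b}" unfolding xw_def by auto
    then show ?thesis using pa pb by auto
  qed
  show "pseudo_cube_free_inf th (xw a b c)"
    unfolding pseudo_cube_free_inf_def inf_factor_def
  proof (intro allI impI notI)
    fix u assume "\<exists>i n. u = map (xw a b c) [i..<i + n]"
    then obtain i n where u: "u = map (xw a b c) [i..<i + n]" by blast
    assume pcu: "pseudo_cube th u"
    have uS: "u \<in> lists S" using rg unfolding u by (auto simp: image_subset_iff)
    from pc_struct[OF ai uS pcu] show False
    proof
      assume "\<exists>X. X \<noteq> [] \<and> u = X @ X @ X"
      then obtain X where X: "X \<noteq> []" "u = X @ X @ X" by blast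
      define q where "q = length X"
      have "\<forall>k<2*q. xw a b c (i + k) = xw a b c (i + k + q)"
      proof (intro allI impI)
        fix k assume k: "k < 2 * q"
        have l: "length u = 3 * q" using X q_def by simp
        have "u ! k = (X @ X) ! k" using X(2) k q_def by (metis append_assoc length_append mult_2 nth_append)
        moreover have "u ! (k + q) = (X @ X) ! k" using X(2) q_def
          by (metis add.commute nth_append_length_plus)
        moreover have "u ! k = xw a b c (i + k)" using factor_nth[OF u[symmetric]] l k by simp
        moreover have "u ! (k + q) = xw a b c (i + (k + q))" using factor_nth[OF u[symmetric]] l k by simp
        ultimately show "xw a b c (i + k) = xw a b c (i + k + q)" by (simp add: add.assoc)
      qed
      then show False using xw_cf[OF d, of q i] X(1) q_def by simp
    next
      assume "\<exists>p s y. u = p @ [y, pith th y] @ s"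
      then obtain p s y where ps: "u = p @ [y, pith th y] @ s" by blast
      have l: "Suc (length p) < length u" using ps by simp
      have "u ! length p = y" using ps by simp
      moreover have "u ! Suc (length p) = pith th y" using ps by (simp add: nth_append)
      ultimately have "xw a b c (i + length p) = y" "xw a b c (Suc (i + length p)) = pith th y"
        using factor_nth[OF u[symmetric]] l by auto
      then show False using nobad[of "i + length p"] by simp
    qed
  qed
qed

section \<open>Small alphabets\<close>

definition pcb :: "('b list \<Rightarrow> 'b list) \<Rightarrow> 'b list \<Rightarrow> bool" where
"pcb th w = (w \<noteq> [] \<and> length w mod 3 = 0 \<and> (let p = length w div 3; X = take p w; Y = take p (drop p w); Z = drop (2*p) w in (Y = X \<or> Y = th X) \<and> (Z = X \<or> Z = th X)))"

definition has_pc :: "('b list \<Rightarrow> 'b list) \<Rightarrow> 'b list \<Rightarrow> bool" where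
"has_pc th w = list_ex (\<lambda>i. list_ex (\<lambda>n. pcb th (take n (drop i w))) [1..<length w - i + 1]) [0..<length w]"

lemma check_rev: "list_all (has_pc rev) (List.n_lists 10 [True,False])"
  by code_simp

lemma check_swap: "list_all (has_pc (\<lambda>v. rev (map Not v))) (List.n_lists 10 [True,False])"
  by code_simp

lemma pcb_sound:
  assumes "pcb th' v" "\<And>w. th' (th' w) = w"
  shows "pseudo_power th' 3 v"
proof -
  define p where "p = length v div 3"
  define X where "X = take p v"
  define Y where "Y = take p (drop p v)"
  define Z where "Z = drop (2*p) v"
  have ne: "v \<noteq> []" and YZ: "Y = X \<or> Y = th' X" "Z = X \<or> Z = th' X"
    using assms(1) unfolding pcb_def Let_def p_def X_def Y_def Z_def by auto
  have "v = take p v @ drop p v" by simp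
  also have "drop p v = take p (drop p v) @ drop p (drop p v)" by (rule append_take_drop_id[symmetric])
  finally have v: "v = X @ Y @ Z" unfolding X_def Y_def Z_def by (simp add: mult_2)
  have A: "\<forall>A\<in>{X,Y,Z}. A = X \<or> A = th' X" using YZ by auto
  have R: "\<forall>A\<in>{X,Y,Z}. \<forall>B\<in>{X,Y,Z}. A = B \<or> A = th' B"
    using A assms(2) by metis
  have mem: "\<forall>i<3. [X, Y, Z] ! i \<in> {X,Y,Z}"
    by (auto simp: numeral_3_eq_3 less_Suc_eq)
  have "\<forall>i<3. \<forall>j<3. [X,Y,Z] ! i = [X,Y,Z] ! j \<or> [X,Y,Z] ! i = th' ([X,Y,Z] ! j)"
  proof (intro allI impI)
    fix i j :: nat assume "i < 3" "j < 3"
    then have "[X, Y, Z] ! i \<in> {X,Y,Z}" "[X, Y, Z] ! j \<in> {X,Y,Z}" using mem by blast+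
    then show "[X,Y,Z] ! i = [X,Y,Z] ! j \<or> [X,Y,Z] ! i = th' ([X,Y,Z] ! j)"
      using R by blast
  qed
  moreover have "length [X,Y,Z] = 3" "v = concat [X,Y,Z]" using v by simp_all
  ultimately show ?thesis unfolding pseudo_power_def using ne by blast
qed

lemma pp_transfer:
  assumes "pseudo_power th' 3 v" "\<And>v. th (map g v) = map g (th' v)"
  shows "pseudo_power th 3 (map g v)"
proof -
  obtain us where us: "length us = 3" "v = concat us"
    "\<forall>i<3. \<forall>j<3. us ! i = us ! j \<or> us ! i = th' (us ! j)" and ne: "v \<noteq> []"
    using assms(1) unfolding pseudo_power_def by blast
  show ?thesis unfolding pseudo_power_def
  proof (intro conjI exI[of _ "map (map g) us"])
    show "map g v \<noteq> []" using ne by simp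
    show "length (map (map g) us) = 3" using us by simp
    show "map g v = concat (map (map g) us)" using us by (simp add: map_concat)
    show "\<forall>i<3. \<forall>j<3. map (map g) us ! i = map (map g) us ! j \<or>
        map (map g) us ! i = th (map (map g) us ! j)"
    proof (intro allI impI)
      fix i j :: nat assume ij: "i < 3" "j < 3"
      then have "us ! i = us ! j \<or> us ! i = th' (us ! j)" using us(3) by blast
      then show "map (map g) us ! i = map (map g) us ! j \<or>
        map (map g) us ! i = th (map (map g) us ! j)"
        using ij us(1) assms(2) by auto
    qed
  qed
qed

lemma has_pc_sound:
  assumes "has_pc th' bs" "\<And>w. th' (th' w) = w"
    "\<And>v. th (map g v) = map g (th' v)"
    "map g bs = map x [0..<length bs]"
  shows "\<not> pseudo_cube_free_inf th x"
proof -
  have "\<exists>i\<in>set [0..<length bs]. \<exists>n\<in>set [1..<length bs - i + 1]. pcb th' (take n (drop i bs))"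
    using assms(1) unfolding has_pc_def list_ex_iff .
  then obtain i n where "i \<in> set [0..<length bs]" "n \<in> set [1..<length bs - i + 1]"
     "pcb th' (take n (drop i bs))" by blast
  then have i: "i < length bs" "n \<le> length bs - i" "pcb th' (take n (drop i bs))" by auto
  have "pseudo_cube th (map g (take n (drop i bs)))"
    using pp_transfer[OF pcb_sound[OF i(3) assms(2)] assms(3)] .
  moreover have "map g (take n (drop i bs)) = map x [i..<i+n]"
  proof -
    have "take n (drop i [0..<length bs]) = [i..<i+n]" using i(1,2) by (simp add: take_upt)
    then show ?thesis using assms(4) by (metis drop_map take_map)
  qed
  ultimately show ?thesis unfolding pseudo_cube_free_inf_def inf_factor_def by blast
qed

lemma binary_case:
  assumes ai: "antimorphic_involution S th" and S: "S = {a, b}" and x: "range x \<subseteq> S"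
  shows "\<not> pseudo_cube_free_inf th x"
proof -
  define g where "g = (\<lambda>v::bool. if v then a else b)"
  define bs where "bs = map (\<lambda>k. x k = a) [0..<10]"
  have bsl: "bs \<in> set (List.n_lists 10 [True,False])"
    unfolding bs_def by (auto simp: set_n_lists)
  have xab: "x k = a \<or> x k = b" for k using x S by auto
  have gx: "map g bs = map x [0..<length bs]"
    unfolding bs_def g_def using xab by (auto simp: map_eq_conv)
  have aS: "a \<in> S" "b \<in> S" using S by auto
  have gS: "map g v \<in> lists S" for v using aS unfolding g_def by auto
  show ?thesis
  proof (cases "pith th a = a")
    case True
    have pb: "pith th b = b"
    proof (rule ccontr)
      assume "pith th b \<noteq> b"
      then have "pith th b = a" "a \<noteq> b" using th_single[OF ai aS(2)] S True by auto
      then show False using pi_inv[OF ai aS(2)] True by simp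
    qed
    have pg: "pith th (g v) = g v" for v using True pb unfolding g_def by simp
    have comm: "th (map g v) = map g (rev v)" for v
      using th_word[OF ai gS[of v]] pg by (simp add: rev_map comp_def)
    have "has_pc rev bs" using check_rev bsl by (simp add: list_all_iff)
    then show ?thesis using has_pc_sound[of rev bs th g x] comm gx by simp
  next
    case False
    have pa: "pith th a = b" "a \<noteq> b" using th_single[OF ai aS(1)] S False by auto
    have pb: "pith th b = a" using pi_inv[OF ai aS(1)] pa by simp
    have pg: "pith th (g v) = g (\<not> v)" for v using pa pb unfolding g_def by simp
    have comm: "th (map g v) = map g (rev (map Not v))" for v
      using th_word[OF ai gS[of v]] pg by (simp add: rev_map comp_def)
    have "has_pc (\<lambda>v. rev (map Not v)) bs" using check_swap bsl by (simp add: list_all_iff)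
    then show ?thesis using has_pc_sound[of "\<lambda>v. rev (map Not v)" bs th g x] comm gx
      by (simp add: rev_map comp_def)
  qed
qed

lemma card_pick:
  assumes "finite A" "card A \<ge> 1"
  obtains x where "x \<in> A"
  using assms by (metis card.empty ex_in_conv not_one_le_zero)

lemma choose_abc:
  assumes ai: "antimorphic_involution S th" and fin: "finite S" and c3: "card S \<ge> 3"
  shows "\<exists>a b c. a \<in> S \<and> b \<in> S \<and> c \<in> S \<and> a \<noteq> b \<and> a \<noteq> c \<and> b \<noteq> c
     \<and> pith th c \<noteq> a \<and> pith th c \<noteq> b"
proof -
  obtain c where c: "c \<in> S" using card_pick[OF fin] c3 by force
  show ?thesis
  proof (cases "pith th c = c")
    case True
    have "card (S - {c}) \<ge> 1" using c3 c fin by (simp add: card_Diff_singleton)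
    then obtain a where a: "a \<in> S - {c}" using card_pick[of "S - {c}"] fin by blast
    have "card (S - {c} - {a}) \<ge> 1" using c3 c fin a by (simp add: card_Diff_singleton)
    then obtain b where b: "b \<in> S - {c} - {a}" using card_pick[of "S - {c} - {a}"] fin by blast
    show ?thesis using a b c True by blast
  next
    case False
    define d where "d = pith th c"
    have dS: "d \<in> S" using th_single[OF ai c] d_def by simp
    have "card (S - {c} - {d}) \<ge> 1" using c3 c dS fin False d_def by (simp add: card_Diff_singleton)
    then obtain e where "e \<in> S - {c} - {d}" using card_pick[of "S - {c} - {d}"] fin by blast
    then have e: "e \<in> S" "e \<noteq> c" "e \<noteq> d" by auto
    show ?thesis
    proof (cases "pith th e = e")
      case True
      show ?thesis
        by (rule exI[of _ c], rule exI[of _ d], rule exI[of _ e]) (use e c dS False d_def True in auto)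
    next
      case False2: False
      define f where "f = pith th e"
      have fS: "f \<in> S" using th_single[OF ai e(1)] f_def by simp
      have ff: "pith th f = e" using pi_inv[OF ai e(1)] f_def by simp
      have dc: "pith th d = c" using pi_inv[OF ai c] d_def by simp
      have "f \<noteq> c" using ff e d_def by auto
      moreover have "f \<noteq> d" using ff dc e by auto
      ultimately show ?thesis using e c fS False2 f_def d_def False
        by (intro exI[of _ e] exI[of _ f] exI[of _ c]) auto
    qed
  qed
qed

theorem mainTheorem2:
  fixes S :: "'a set" and m :: nat
  assumes "finite S" and "card S = m" and "m \<ge> 1"
  shows "(m \<le> 2 \<longrightarrow> (\<forall>\<theta>. antimorphic_involution S \<theta> \<longrightarrow>
            \<not> (\<exists>x::nat \<Rightarrow> 'a. range x \<subseteq> S \<and> pseudo_cube_free_inf \<theta> x))) \<and>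
         (m \<ge> 3 \<longrightarrow> (\<forall>\<theta>. antimorphic_involution S \<theta> \<longrightarrow>
            (\<exists>x::nat \<Rightarrow> 'a. range x \<subseteq> S \<and> pseudo_cube_free_inf \<theta> x)))"
proof (intro conjI impI allI)
  fix th assume m2: "m \<le> 2" and ai: "antimorphic_involution S th"
  have "\<exists>a b. S = {a, b}"
  proof (cases "m = 1")
    case True
    then obtain a where "S = {a}" using assms(2) card_1_singletonE by blast
    then show ?thesis by auto
  next
    case False
    then have "card S = 2" using m2 assms by simp
    then show ?thesis by (auto simp: card_2_iff)
  qed
  then obtain a b where "S = {a, b}" by blast
  then show "\<not> (\<exists>x::nat \<Rightarrow> 'a. range x \<subseteq> S \<and> pseudo_cube_free_inf th x)"
    using binary_case[OF ai] by blast
next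
  fix th assume m3: "m \<ge> 3" and ai: "antimorphic_involution S th"
  obtain a b c where abc: "a \<in> S" "b \<in> S" "c \<in> S" "a \<noteq> b" "a \<noteq> c" "b \<noteq> c"
     "pith th c \<noteq> a" "pith th c \<noteq> b"
    using choose_abc[OF ai assms(1)] m3 assms(2) by blast
  show "\<exists>x::nat \<Rightarrow> 'a. range x \<subseteq> S \<and> pseudo_cube_free_inf th x"
    using ternary_free[OF ai abc] by blast
qed

end
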